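(* Let $m\ge1$, let $A_1,\dots,A_m\in\mathbb{C}^{n\times n}$ be invertible, let $p_1,\dots,p_m>0$, and let $Q\in\mathbb{C}^{n\times n}$ be Hermitian positive definite. Then the equation $$X-\sum_{i=1}^{m}A_i^*X^{p_i}A_i=Q$$ has a Hermitian positive definite solution $X$ if and only if each $A_i$ can be factored as $$A_i=(U^*MU)^{-p_i/2}\,V_i\,N\,U,\qquad i=1,\dots,m,$$ where $U$ is unitary, $M$ is a real diagonal matrix with $M>UQU^*$, $N$ is Hermitian positive definite with $M-N^2=UQU^*$, and $V_1,\dots,V_m\in\mathbb{C}^{n\times n}$ satisfy that the block column $\begin{pmatrix}V_1\\ \vdots\\ V_m\end{pmatrix}$ is column orthonormal, i.e. $\sum_{i=1}^m V_i^*V_i=I$. In this case $X=U^*MU$ is a solution.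
   Context: For Hermitian $X,Y$, $X>Y$ means $X-Y$ is positive definite. For a Hermitian positive definite matrix $P$ and real $t$, $P^t$ is the principal matrix power defined via the spectral decomposition. *)

theory Defs
  imports "HOL-Analysis.Analysis"
begin

definition cadj :: "complex^'n^'m \<Rightarrow> complex^'m^'n" where
  "cadj A = (\<chi> i j. cnj (A $ j $ i))"

definition hermitian :: "complex^'n^'n \<Rightarrow> bool" where
  "hermitian A \<longleftrightarrow> cadj A = A"

definition unitary :: "complex^'n^'n \<Rightarrow> bool" where
  "unitary U \<longleftrightarrow> cadj U ** U = mat 1 \<and> U ** cadj U = mat 1"

definition pos_def :: "complex^'n^'n \<Rightarrow> bool" where
  "pos_def A \<longleftrightarrow> hermitian A \<and>
     (\<forall>x :: complex^'n. x \<noteq> 0 \<longrightarrow> 0 < Re (\<Sum>i\<in>UNIV. cnj (x $ i) * (A *v x) $ i))"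

definition loewner_gt :: "complex^'n^'n \<Rightarrow> complex^'n^'n \<Rightarrow> bool" where
  "loewner_gt X Y \<longleftrightarrow> pos_def (X - Y)"

definition real_diag :: "complex^'n^'n \<Rightarrow> bool" where
  "real_diag M \<longleftrightarrow> (\<forall>i j. i \<noteq> j \<longrightarrow> M $ i $ j = 0) \<and> (\<forall>i. Im (M $ i $ i) = 0)"

definition mpow :: "complex^'n^'n \<Rightarrow> real \<Rightarrow> complex^'n^'n" where
  "mpow P t = (THE Y. \<exists>U D. unitary U \<and> real_diag D \<and> (\<forall>i. 0 < Re (D $ i $ i)) \<and>
      P = cadj U ** D ** U \<and>
      Y = cadj U ** (\<chi> i j. if i = j then complex_of_real (Re (D $ i $ i) powr t) else 0) ** U)"

end

theory Submission
  imports Defs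
begin


definition cinner :: "complex^'n \<Rightarrow> complex^'n \<Rightarrow> complex" where
  "cinner x y = (\<Sum>i\<in>UNIV. cnj (x $ i) * y $ i)"

lemma cinner_add_left: "cinner (x + y) z = cinner x z + cinner y z"
  by (simp add: cinner_def algebra_simps sum.distrib)
lemma cinner_add_right: "cinner z (x + y) = cinner z x + cinner z y"
  by (simp add: cinner_def algebra_simps sum.distrib)
lemma cinner_diff_left: "cinner (x - y) z = cinner x z - cinner y z"
  by (simp add: cinner_def algebra_simps sum_subtractf)
lemma cinner_diff_right: "cinner z (x - y) = cinner z x - cinner z y"
  by (simp add: cinner_def algebra_simps sum_subtractf)
lemma cinner_smult_left: "cinner (c *s x) z = cnj c * cinner x z"
  by (simp add: cinner_def algebra_simps sum_distrib_left)
lemma cinner_smult_right: "cinner z (c *s x) = c * cinner z x"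
  by (simp add: cinner_def algebra_simps sum_distrib_left)
lemma vec_scaleR_nth: "(c *\<^sub>R (x::complex^'n)) $ i = of_real c * x $ i"
  unfolding vector_scaleR_component by (rule scaleR_conv_of_real)
lemma cinner_scaleR_left: "cinner (c *\<^sub>R x) z = of_real c * cinner x z"
  by (simp add: cinner_def vec_scaleR_nth algebra_simps sum_distrib_left del: vector_scaleR_component)
lemma cinner_scaleR_right: "cinner z (c *\<^sub>R x) = of_real c * cinner z x"
  by (simp add: cinner_def vec_scaleR_nth algebra_simps sum_distrib_left del: vector_scaleR_component)
lemma cinner_zero_left[simp]: "cinner 0 x = 0" by (simp add: cinner_def)
lemma cinner_zero_right[simp]: "cinner x 0 = 0" by (simp add: cinner_def)
lemma cinner_commute: "cinner y x = cnj (cinner x y)"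
  by (simp add: cinner_def mult.commute)

lemma Re_cinner: "Re (cinner x y) = inner x y"
  by (simp add: cinner_def inner_vec_def Re_sum inner_complex_def)

lemma cinner_self: "cinner x x = of_real (inner x x)"
proof -
  have "Im (cinner x x) = 0"
    by (simp add: cinner_def Im_sum)
  then show ?thesis using Re_cinner[of x x] by (simp add: complex_eq_iff)
qed

lemma cinner_self_eq_0: "cinner x x = 0 \<longleftrightarrow> x = 0"
  by (simp add: cinner_self)

lemma cadj_cadj[simp]: "cadj (cadj A) = A"
  by (simp add: cadj_def vec_eq_iff)
lemma cadj_mult: "cadj (A ** B) = cadj B ** cadj A"
  by (simp add: cadj_def matrix_matrix_mult_def vec_eq_iff mult.commute)
lemma cadj_add: "cadj (A + B) = cadj A + cadj B"
  by (simp add: cadj_def vec_eq_iff)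
lemma cadj_diff: "cadj (A - B) = cadj A - cadj B"
  by (simp add: cadj_def vec_eq_iff)
lemma cadj_mat[simp]: "cadj (mat 1 :: complex^'n^'n) = mat 1"
  by (simp add: cadj_def vec_eq_iff mat_def)
lemma cadj_sum: "finite I \<Longrightarrow> cadj (\<Sum>i\<in>I. f i) = (\<Sum>i\<in>I. cadj (f i))"
  by (induct rule: finite_induct) (auto simp: cadj_add, simp add: cadj_def vec_eq_iff)

lemma cinner_mv: "cinner x (A *v y) = cinner (cadj A *v x) y"
  by (simp add: cinner_def cadj_def matrix_vector_mult_def sum_distrib_left sum_distrib_right
      mult_ac cnj_sum) (rule sum.swap)

lemma mv_smult: "(A::complex^'n^'m) *v (c *s x) = c *s (A *v x)"
  by (simp add: matrix_vector_mult_def vec_eq_iff sum_distrib_left mult_ac)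
lemma mv_scaleR: "(A::complex^'n^'m) *v (c *\<^sub>R x) = c *\<^sub>R (A *v x)"
  by (simp add: matrix_vector_mult_def vec_eq_iff vec_scaleR_nth sum_distrib_left mult_ac del: vector_scaleR_component)

lemma matrix_sub_ldistrib: "(A::complex^'n^'m) ** (B - C) = A ** B - A ** C"
  by (simp add: matrix_matrix_mult_def vec_eq_iff algebra_simps sum_subtractf)
lemma matrix_sub_rdistrib: "((B::complex^'n^'m) - C) ** A = B ** A - C ** A"
  by (simp add: matrix_matrix_mult_def vec_eq_iff algebra_simps sum_subtractf)
lemma matrix_add_rdistrib': "((B::complex^'n^'m) + C) ** A = B ** A + C ** A"
  by (simp add: matrix_matrix_mult_def vec_eq_iff algebra_simps sum.distrib)

lemma sum_mmul_right: "finite I \<Longrightarrow> (\<Sum>i\<in>I. f i) ** (A::complex^'n^'m) = (\<Sum>i\<in>I. f i ** A)"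
  by (induct rule: finite_induct) (auto simp: matrix_add_rdistrib')
lemma sum_mmul_left: "finite I \<Longrightarrow> (A::complex^'n^'m) ** (\<Sum>i\<in>I. f i) = (\<Sum>i\<in>I. A ** f i)"
  by (induct rule: finite_induct) (auto simp: matrix_add_ldistrib)
lemma sum_mv: "finite I \<Longrightarrow> (\<Sum>i\<in>I. f i) *v (x::complex^'n) = (\<Sum>i\<in>I. f i *v x)"
  by (induct rule: finite_induct) (auto simp: matrix_vector_mult_add_rdistrib)
lemma cinner_sum_right: "finite I \<Longrightarrow> cinner x (\<Sum>i\<in>I. f i) = (\<Sum>i\<in>I. cinner x (f i))"
  by (induct rule: finite_induct) (auto simp: cinner_add_right)

lemma pos_def_quad: "pos_def A \<longleftrightarrow> hermitian A \<and> (\<forall>x. x \<noteq> 0 \<longrightarrow> 0 < Re (cinner x (A *v x)))"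
  by (simp add: pos_def_def cinner_def)



definition diagm :: "('n \<Rightarrow> complex) \<Rightarrow> complex^'n^'n" where
  "diagm f = (\<chi> i j. if i = j then f i else 0)"

lemma mul_diagm: "(T ** diagm f) $ i $ j = T $ i $ j * f j"
  by (simp add: diagm_def matrix_matrix_mult_def if_distrib if_distribR sum.delta' cong: if_cong)
lemma diagm_mul: "(diagm f ** T) $ i $ j = f i * T $ i $ j"
  by (simp add: diagm_def matrix_matrix_mult_def if_distrib if_distribR sum.delta cong: if_cong)
lemma diagm_mult: "diagm f ** diagm g = diagm (\<lambda>i. f i * g i)"
  by (simp add: vec_eq_iff mul_diagm) (simp add: diagm_def)
lemma cadj_diagm: "cadj (diagm f) = diagm (\<lambda>i. cnj (f i))"
  by (simp add: cadj_def diagm_def vec_eq_iff)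
lemma diagm_one: "diagm (\<lambda>i. 1) = mat 1"
  by (simp add: diagm_def mat_def)

lemma real_diag_diagm: "real_diag D \<Longrightarrow> D = diagm (\<lambda>i. of_real (Re (D $ i $ i)))"
  by (auto simp: real_diag_def diagm_def vec_eq_iff complex_eq_iff)

definition dpow :: "complex^'n^'n \<Rightarrow> real \<Rightarrow> complex^'n^'n" where
  "dpow D t = (\<chi> i j. if i = j then complex_of_real (Re (D $ i $ i) powr t) else 0)"

lemma dpow_diagm: "dpow D t = diagm (\<lambda>i. of_real (Re (D $ i $ i) powr t))"
  by (simp add: dpow_def diagm_def)

lemma unitaryD1: "unitary U \<Longrightarrow> cadj U ** U = mat 1" by (simp add: unitary_def)
lemma unitaryD2: "unitary U \<Longrightarrow> U ** cadj U = mat 1" by (simp add: unitary_def)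

lemma spec_unique:
  assumes U: "unitary U" and W: "unitary W"
    and eq: "cadj U ** diagm d ** U = cadj W ** diagm e ** W"
  shows "cadj U ** diagm (\<lambda>i. g (d i)) ** U = cadj W ** diagm (\<lambda>i. g (e i)) ** W"
proof -
  define T where "T = W ** cadj U"
  have "W ** (cadj U ** diagm d ** U) ** cadj U = W ** (cadj W ** diagm e ** W) ** cadj U"
    using eq by simp
  also have "W ** (cadj W ** diagm e ** W) ** cadj U = (W ** cadj W) ** diagm e ** (W ** cadj U)"
    by (simp add: matrix_mul_assoc)
  also have "\<dots> = diagm e ** T" using W by (simp add: unitaryD2 T_def)
  also have "W ** (cadj U ** diagm d ** U) ** cadj U = (W ** cadj U) ** diagm d ** (U ** cadj U)"
    by (simp add: matrix_mul_assoc)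
  also have "\<dots> = T ** diagm d" using U by (simp add: unitaryD2 T_def)
  finally have TD: "T ** diagm d = diagm e ** T" .
  have TG: "T ** diagm (\<lambda>i. g (d i)) = diagm (\<lambda>i. g (e i)) ** T"
  proof (rule vec_eq_iff[THEN iffD2], rule allI, rule vec_eq_iff[THEN iffD2], rule allI)
    fix i j
    have "T $ i $ j * d j = e i * T $ i $ j"
      using arg_cong[OF TD, of "\<lambda>M. M $ i $ j"] by (simp add: mul_diagm diagm_mul)
    then have "T $ i $ j = 0 \<or> d j = e i" by (auto simp: mult.commute)
    then show "(T ** diagm (\<lambda>i. g (d i))) $ i $ j = (diagm (\<lambda>i. g (e i)) ** T) $ i $ j"
      by (auto simp: mul_diagm diagm_mul mult.commute)
  qed
  have TU: "T ** U = W" using U by (simp add: T_def matrix_mul_assoc[symmetric] unitaryD1)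
  have WT: "cadj W ** T = cadj U" using W by (simp add: T_def matrix_mul_assoc unitaryD1)
  have "cadj W ** diagm (\<lambda>i. g (e i)) ** W = cadj W ** (diagm (\<lambda>i. g (e i)) ** T) ** U"
    by (simp add: TU[symmetric] matrix_mul_assoc)
  also have "\<dots> = (cadj W ** T) ** diagm (\<lambda>i. g (d i)) ** U"
    by (simp add: TG[symmetric] matrix_mul_assoc)
  also have "\<dots> = cadj U ** diagm (\<lambda>i. g (d i)) ** U" by (simp add: WT)
  finally show ?thesis by simp
qed

lemma mpow_eq:
  assumes U: "unitary U" and D: "real_diag D" and pos: "\<forall>i. 0 < Re (D $ i $ i)"
    and P: "P = cadj U ** D ** U"
  shows "mpow P t = cadj U ** dpow D t ** U"
  unfolding mpow_def
proof (rule the_equality)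
  show "\<exists>U' D'. unitary U' \<and> real_diag D' \<and> (\<forall>i. 0 < Re (D' $ i $ i)) \<and> P = cadj U' ** D' ** U' \<and>
      cadj U ** dpow D t ** U = cadj U' ** (\<chi> i j. if i = j then complex_of_real (Re (D' $ i $ i) powr t) else 0) ** U'"
    using assms by (auto simp: dpow_def)
next
  fix Y assume "\<exists>U' D'. unitary U' \<and> real_diag D' \<and> (\<forall>i. 0 < Re (D' $ i $ i)) \<and> P = cadj U' ** D' ** U' \<and>
      Y = cadj U' ** (\<chi> i j. if i = j then complex_of_real (Re (D' $ i $ i) powr t) else 0) ** U'"
  then obtain U' D' where U': "unitary U'" and D': "real_diag D'" and P': "P = cadj U' ** D' ** U'"
    and Y: "Y = cadj U' ** dpow D' t ** U'"
    by (auto simp: dpow_def)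
  have "cadj U ** diagm (\<lambda>i. of_real (Re (D $ i $ i))) ** U = cadj U' ** diagm (\<lambda>i. of_real (Re (D' $ i $ i))) ** U'"
    using P P' real_diag_diagm[OF D] real_diag_diagm[OF D'] by simp
  from spec_unique[OF U U' this, of "\<lambda>z. of_real (Re z powr t)"]
  show "Y = cadj U ** dpow D t ** U" by (simp add: Y dpow_diagm)
qed



lemma diagm_mv: "(diagm f *v x) $ i = f i * x $ i"
  by (simp add: diagm_def matrix_vector_mult_def if_distrib if_distribR sum.delta cong: if_cong)

lemma pos_def_diagm:
  assumes "\<forall>i. f i = of_real (r i) \<and> 0 < r i"
  shows "pos_def (diagm f)"
  unfolding pos_def_quad
proof safe
  have "f = (\<lambda>i. of_real (r i))" using assms by auto
  then show "hermitian (diagm f)" by (simp add: hermitian_def cadj_diagm)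
next
  fix x :: "complex^'a" assume "x \<noteq> 0"
  then obtain k where k: "x $ k \<noteq> 0" by (auto simp: vec_eq_iff)
  have eq: "Re (cinner x (diagm f *v x)) = (\<Sum>i\<in>UNIV. r i * (Re (x$i)^2 + Im (x$i)^2))"
    using assms by (simp add: cinner_def diagm_mv Re_sum power2_eq_square algebra_simps)
  have "0 < (\<Sum>i\<in>UNIV. r i * (Re (x$i)^2 + Im (x$i)^2))"
  proof (rule sum_pos2[where i=k])
    have "0 < Re (x$k)^2 + Im (x$k)^2" using k
      by (metis complex_neq_0 power2_eq_square)
    then show "0 < r k * (Re (x$k)^2 + Im (x$k)^2)" using assms by simp
  qed (use assms in \<open>auto intro!: mult_nonneg_nonneg simp: less_imp_le\<close>)
  then show "0 < Re (cinner x (diagm f *v x))" using eq by simp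
qed

lemma hermitian_cinner: "hermitian A \<Longrightarrow> cinner x (A *v y) = cinner (A *v x) y"
  by (simp add: hermitian_def cinner_mv)

lemma pos_def_congr:
  fixes A :: "complex^'b^'a" and P :: "complex^'a^'a"
  assumes P: "pos_def P" and inj: "\<And>x. A *v x = 0 \<Longrightarrow> x = 0"
  shows "pos_def (cadj A ** P ** A)"
  unfolding pos_def_quad
proof safe
  show "hermitian (cadj A ** P ** A)" using P
    by (simp add: hermitian_def pos_def_def cadj_mult matrix_mul_assoc)
next
  fix x :: "complex^'b" assume "x \<noteq> 0"
  then have "A *v x \<noteq> 0" using inj by blast
  then have "0 < Re (cinner (A *v x) (P *v (A *v x)))" using P by (simp add: pos_def_quad)
  also have "cinner (A *v x) (P *v (A *v x)) = cinner x ((cadj A ** P ** A) *v x)"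
  proof -
    have "(cadj A ** P ** A) *v x = cadj A *v (P *v (A *v x))" by (simp add: matrix_vector_mul_assoc matrix_mul_assoc)
    then show ?thesis using cinner_mv[of x "cadj A"] by simp
  qed
  finally show "0 < Re (cinner x ((cadj A ** P ** A) *v x))" .
qed

lemma invertible_inj: "invertible (A::complex^'n^'n) \<Longrightarrow> A *v x = 0 \<Longrightarrow> x = 0"
  by (metis invertible_def matrix_vector_mul_assoc matrix_vector_mul_lid matrix_vector_mult_0_right)

lemma unitary_inj: "unitary U \<Longrightarrow> U *v x = 0 \<Longrightarrow> x = 0"
  by (metis unitaryD1 matrix_vector_mul_assoc matrix_vector_mul_lid matrix_vector_mult_0_right)
lemma unitary_inj': "unitary U \<Longrightarrow> cadj U *v x = 0 \<Longrightarrow> x = 0"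
  by (metis unitaryD2 matrix_vector_mul_assoc matrix_vector_mul_lid matrix_vector_mult_0_right)

lemma pos_def_add: "pos_def A \<Longrightarrow> pos_def B \<Longrightarrow> pos_def (A + B)"
  by (auto simp: pos_def_quad hermitian_def cadj_add matrix_vector_mult_add_rdistrib cinner_add_right
      intro: add_pos_pos)

lemma pos_def_sum:
  assumes "finite I" "I \<noteq> {}" "\<forall>i\<in>I. pos_def (f i)"
  shows "pos_def (\<Sum>i\<in>I. f i)"
  using assms
proof (induct rule: finite_ne_induct)
  case (singleton x) then show ?case by simp
next
  case (insert x F) then show ?case by (simp add: pos_def_add)
qed

lemma pos_def_diag_pos:
  assumes "pos_def M" shows "0 < Re (M $ i $ i)"
proof -
  have "axis i 1 \<noteq> (0::complex^'a)" by (simp add: axis_eq_0_iff)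
  then have "0 < Re (cinner (axis i 1) (M *v axis i 1))" using assms by (simp add: pos_def_quad)
  moreover have "cinner (axis i 1) (M *v axis i 1) = M $ i $ i"
    by (simp add: cinner_def axis_def matrix_vector_mult_def if_distrib if_distribR sum.delta cong: if_cong)
  ultimately show ?thesis by simp
qed

lemma loewner_pos_def: "loewner_gt M R \<Longrightarrow> pos_def R \<Longrightarrow> pos_def M"
  unfolding loewner_gt_def using pos_def_add[of "M - R" R] by simp

locale specd =
  fixes U D :: "complex^'n^'n"
  assumes U: "unitary U" and D: "real_diag D" and pos: "\<forall>i. 0 < Re (D $ i $ i)"
begin

abbreviation "P \<equiv> cadj U ** D ** U"

lemma mp: "mpow P t = cadj U ** dpow D t ** U"
  by (rule mpow_eq[OF U D pos refl])

lemma mpow_add: "mpow P s ** mpow P t = mpow P (s + t)"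
proof -
  have "mpow P s ** mpow P t = cadj U ** dpow D s ** (U ** cadj U) ** dpow D t ** U"
    by (simp add: mp matrix_mul_assoc)
  also have "\<dots> = cadj U ** (dpow D s ** dpow D t) ** U"
    using U by (simp add: unitaryD2 matrix_mul_assoc)
  also have "dpow D s ** dpow D t = dpow D (s + t)"
    by (simp add: dpow_diagm diagm_mult powr_add)
  finally show ?thesis by (simp add: mp)
qed

lemma mpow_0: "mpow P 0 = mat 1"
proof -
  have "\<forall>i. Re (D $ i $ i) \<noteq> 0" using pos by (metis order.strict_implies_not_eq)
  then have "dpow D 0 = mat 1"
    by (simp add: dpow_diagm diagm_one[symmetric])
  then show ?thesis using U by (simp add: mp unitaryD1)
qed

lemma mpow_1: "mpow P 1 = P"
proof -
  have "dpow D 1 = diagm (\<lambda>i. of_real (Re (D $ i $ i)))" using pos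
    by (simp add: dpow_diagm less_imp_le)
  also have "\<dots> = D" using real_diag_diagm[OF D] by simp
  finally have "dpow D 1 = D" .
  then show ?thesis by (simp add: mp)
qed

lemma mpow_pos_def: "pos_def (mpow P t)"
proof -
  have "\<forall>i. 0 < Re (D $ i $ i) powr t"
  proof
    fix i show "0 < Re (D $ i $ i) powr t" using pos[rule_format, of i] by simp
  qed
  then show ?thesis
    unfolding mp dpow_diagm
    by (intro pos_def_congr[OF pos_def_diagm[where r="\<lambda>i. Re (D $ i $ i) powr t"] unitary_inj[OF U]]) auto
qed

lemma mpow_herm: "cadj (mpow P t) = mpow P t"
  using mpow_pos_def[of t] by (simp add: pos_def_def hermitian_def)

lemma P_pos_def: "pos_def P"
proof -
  have "pos_def (cadj U ** diagm (\<lambda>i. of_real (Re (D $ i $ i))) ** U)"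
    by (rule pos_def_congr[OF pos_def_diagm[where r="\<lambda>i. Re (D $ i $ i)"] unitary_inj[OF U]]) (use pos in auto)
  then show ?thesis using real_diag_diagm[OF D] by simp
qed

end



lemma exists_orth:
  fixes v :: "nat \<Rightarrow> complex^'n"
  assumes k: "k < CARD('n)"
  shows "\<exists>x. x \<noteq> 0 \<and> (\<forall>j<k. cinner (v j) x = 0)"
proof -
  define B where "B = v ` {..<k} \<union> (\<lambda>j. \<i> *s v j) ` {..<k}"
  have fB: "finite B" by (simp add: B_def)
  have "card B \<le> card (v ` {..<k}) + card ((\<lambda>j. \<i> *s v j) ` {..<k})"
    unfolding B_def by (rule card_Un_le)
  also have "\<dots> \<le> k + k"
    by (intro add_mono) (metis card_image_le card_lessThan finite_lessThan)+
  finally have "card B \<le> 2 * k" by simp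
  then have "dim B < DIM(complex^'n)" using k dim_le_card'[OF fB] by simp
  then obtain x where x: "x \<noteq> 0" "\<And>y. y \<in> span B \<Longrightarrow> orthogonal x y"
    using orthogonal_to_subspace_exists by blast
  have "cinner (v j) x = 0" if j: "j < k" for j
  proof -
    have "orthogonal x (v j)" "orthogonal x (\<i> *s v j)"
      using j by (auto intro!: x(2) span_base simp: B_def)
    then have "Re (cinner x (v j)) = 0" "Re (cinner x (\<i> *s v j)) = 0"
      by (simp_all add: orthogonal_def Re_cinner)
    then have "cinner x (v j) = 0"
      by (simp add: cinner_smult_right complex_eq_iff)
    then show ?thesis by (simp add: cinner_commute[of x])
  qed
  with x show ?thesis by blast
qed

lemma real_quad_lemma:
  fixes a b :: real
  assumes a: "0 \<le> a" and h: "\<And>t. 2 * t * a + t^2 * b \<le> 0"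
  shows "a = 0"
proof (rule ccontr)
  assume "a \<noteq> 0"
  with a have a: "0 < a" by simp
  define t where "t = a / (\<bar>b\<bar> + 1)"
  have t: "0 < t" using a by (simp add: t_def add_pos_nonneg)
  have tb: "t * \<bar>b\<bar> \<le> a"
  proof -
    have "t * \<bar>b\<bar> = a * (\<bar>b\<bar> / (\<bar>b\<bar> + 1))" by (simp add: t_def)
    also have "\<dots> \<le> a * 1" using a by (intro mult_left_mono) auto
    finally show ?thesis by simp
  qed
  have "t^2 * (- \<bar>b\<bar>) \<le> t^2 * b" by (intro mult_left_mono) auto
  then have "t^2 * b \<ge> - (t * (t * \<bar>b\<bar>))"
    by (simp add: power2_eq_square mult.assoc)
  moreover have "t * (t * \<bar>b\<bar>) \<le> t * a" using tb t by (simp add: mult_left_mono)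
  ultimately have "2 * t * a + t^2 * b \<ge> t * a" by linarith
  moreover have "t * a > 0" using t a by simp
  ultimately show False using h[of t] by linarith
qed

lemma cont_quad: "continuous_on S (\<lambda>x::complex^'n. Re (cinner x (H *v x)))"
  unfolding cinner_def matrix_vector_mult_def
  by (intro continuous_intros)

lemma eig_step:
  fixes H :: "complex^'n^'n" and v :: "nat \<Rightarrow> complex^'n"
  assumes herm: "hermitian H" and ev: "\<forall>j<k. H *v v j = lam j *s v j" and k: "k < CARD('n)"
  shows "\<exists>y c. cinner y y = 1 \<and> (\<forall>j<k. cinner (v j) y = 0) \<and> H *v y = c *s y"
proof -
  define C where "C = {x::complex^'n. \<forall>j<k. cinner (v j) x = 0}"
  define f where "f x = Re (cinner x (H *v x))" for x :: "complex^'n"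
  have C_add: "x + y \<in> C" if "x \<in> C" "y \<in> C" for x y
    using that by (simp add: C_def cinner_add_right)
  have C_scale: "c *\<^sub>R x \<in> C" if "x \<in> C" for x c
    using that by (simp add: C_def cinner_scaleR_right)
  have "subspace C"
    unfolding subspace_def using C_add C_scale by (auto simp: C_def)
  then have clC: "closed C" by (rule closed_subspace)
  define S where "S = C \<inter> sphere 0 1"
  have cS: "compact S" unfolding S_def using clC by (intro closed_Int_compact) auto
  obtain x0 where x0: "x0 \<noteq> 0" "\<forall>j<k. cinner (v j) x0 = 0" using exists_orth[OF k] by blast
  have "(1 / norm x0) *\<^sub>R x0 \<in> S"
    using x0 by (simp add: S_def C_def cinner_scaleR_right)
  then have neS: "S \<noteq> {}" by blast
  obtain y where yS: "y \<in> S" and ymax: "\<forall>z\<in>S. f z \<le> f y"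
    using continuous_attains_sup[OF cS neS cont_quad[of S H]] unfolding f_def by blast
  define \<mu> where "\<mu> = f y"
  have yC: "y \<in> C" and ny: "norm y = 1" using yS by (auto simp: S_def)
  have yy: "cinner y y = 1" using ny by (simp add: cinner_self power2_norm_eq_inner[symmetric])
  have f_scale: "f (c *\<^sub>R x) = c^2 * f x" for c x
    by (simp add: f_def cinner_scaleR_left cinner_scaleR_right mv_scaleR power2_eq_square)
  have bound: "f x \<le> \<mu> * (x \<bullet> x)" if xC: "x \<in> C" for x
  proof (cases "x = 0")
    case True then show ?thesis by (simp add: f_def)
  next
    case False
    then have "(1 / norm x) *\<^sub>R x \<in> S" using C_scale[OF xC] by (simp add: S_def)
    then have "f ((1 / norm x) *\<^sub>R x) \<le> \<mu>" using ymax by (simp add: \<mu>_def)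
    then have "(1 / norm x)^2 * f x \<le> \<mu>" by (simp add: f_scale)
    then have "f x \<le> \<mu> * (norm x)^2" using False
      by (simp add: field_simps power2_eq_square)
    then show ?thesis by (simp add: power2_norm_eq_inner)
  qed
  define c where "c = cinner y (H *v y)"
  have cc: "cnj c = c"
    unfolding c_def using hermitian_cinner[OF herm, of y y] by (simp add: cinner_commute[of y "H *v y"])
  define w where "w = H *v y - c *s y"
  have wC: "w \<in> C"
    unfolding C_def
  proof safe
    fix j assume j: "j < k"
    have "cinner (v j) (H *v y) = cinner (H *v v j) y" by (rule hermitian_cinner[OF herm])
    also have "\<dots> = 0" using ev j yC by (simp add: cinner_smult_left C_def)
    finally show "cinner (v j) w = 0" using j yC by (simp add: w_def cinner_diff_right cinner_smult_right C_def)
  qed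
  have wy: "cinner w y = 0"
  proof -
    have "cinner (H *v y) y = c"
      using hermitian_cinner[OF herm, of y y] by (simp add: c_def)
    then show ?thesis using cc yy by (simp add: w_def cinner_diff_left cinner_smult_left)
  qed
  have yw: "cinner y w = 0" using wy by (simp add: cinner_commute[of y w])
  have Hy: "H *v y = w + c *s y" by (simp add: w_def)
  have wHy: "cinner w (H *v y) = cinner w w"
    by (simp add: Hy cinner_add_right cinner_smult_right wy)
  have yHw: "cinner y (H *v w) = cnj (cinner w w)"
    using hermitian_cinner[OF herm, of y w] wHy by (simp add: cinner_commute[of "H *v y" w])
  define a where "a = w \<bullet> w"
  have aw: "cinner w w = of_real a" by (simp add: a_def cinner_self)
  have quad: "2 * t * a + t^2 * (f w - \<mu> * a) \<le> 0" for t
  proof -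
    have zC: "y + t *\<^sub>R w \<in> C" using C_add[OF yC C_scale[OF wC]] .
    have "f (y + t *\<^sub>R w) = \<mu> + 2 * t * a + t^2 * f w"
      by (simp add: f_def \<mu>_def matrix_vector_right_distrib mv_scaleR cinner_add_left cinner_add_right
          cinner_scaleR_left cinner_scaleR_right wHy yHw aw power2_eq_square algebra_simps)
    moreover have "(y + t *\<^sub>R w) \<bullet> (y + t *\<^sub>R w) = 1 + t^2 * a"
    proof -
      have "(y + t *\<^sub>R w) \<bullet> (y + t *\<^sub>R w) = Re (cinner (y + t *\<^sub>R w) (y + t *\<^sub>R w))"
        by (simp add: Re_cinner)
      also have "\<dots> = 1 + t^2 * a"
        by (simp add: cinner_add_left cinner_add_right cinner_scaleR_left cinner_scaleR_right
            yy wy yw aw power2_eq_square)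
      finally show ?thesis .
    qed
    ultimately have "\<mu> + 2 * t * a + t^2 * f w \<le> \<mu> * (1 + t^2 * a)"
      using bound[OF zC] by simp
    then show ?thesis by (simp add: algebra_simps)
  qed
  have "a = 0"
    by (rule real_quad_lemma[OF _ quad]) (simp add: a_def)
  then have "w = 0" by (simp add: a_def)
  then have "H *v y = c *s y" by (simp add: w_def)
  then show ?thesis using yy yC unfolding C_def by blast
qed

lemma eig_family:
  fixes H :: "complex^'n^'n"
  assumes herm: "hermitian H"
  shows "k \<le> CARD('n) \<Longrightarrow> \<exists>v lam. (\<forall>i<k. \<forall>j<k. cinner (v i) (v j) = (if i = j then 1 else 0)) \<and>
            (\<forall>j<k. H *v v j = lam j *s v j)"
proof (induct k)
  case 0 then show ?case by simp
next
  case (Suc k)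
  then obtain v lam where orth: "\<forall>i<k. \<forall>j<k. cinner (v i) (v j) = (if i = j then 1 else 0)"
    and ev: "\<forall>j<k. H *v v j = lam j *s v j" by auto
  obtain y c where yy: "cinner y y = 1" and yo: "\<forall>j<k. cinner (v j) y = 0" and Hy: "H *v y = c *s y"
    using eig_step[OF herm ev] Suc(2) by auto
  have yo': "\<forall>j<k. cinner y (v j) = 0" using yo by (simp add: cinner_commute[of y])
  show ?case
    apply (rule exI[of _ "v(k := y)"], rule exI[of _ "lam(k := c)"])
    using orth ev yy yo yo' Hy by (auto simp: less_Suc_eq)
qed

theorem spectral:
  fixes H :: "complex^'n^'n"
  assumes "pos_def H"
  shows "\<exists>U D. unitary U \<and> real_diag D \<and> (\<forall>i. 0 < Re (D $ i $ i)) \<and> H = cadj U ** D ** U"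
proof -
  have herm: "hermitian H" using assms by (simp add: pos_def_def)
  obtain v lam where orth: "\<forall>i<CARD('n). \<forall>j<CARD('n). cinner (v i) (v j) = (if i = j then 1 else 0)"
    and ev: "\<forall>j<CARD('n). H *v v j = lam j *s v j"
    using eig_family[OF herm order_refl] by blast
  obtain ix :: "'n \<Rightarrow> nat" where ix: "bij_betw ix UNIV {0..<CARD('n)}"
    using ex_bij_betw_finite_nat[of "UNIV :: 'n set"] by auto
  have ixl: "ix a < CARD('n)" for a using ix by (auto simp: bij_betw_def)
  have ixe: "ix a = ix b \<longleftrightarrow> a = b" for a b using ix by (auto simp: bij_betw_def inj_on_def)
  define U where "U = (\<chi> a b. cnj (v (ix a) $ b))"
  have cU: "cadj U $ c $ b = v (ix b) $ c" for b c by (simp add: U_def cadj_def)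
  have Ue: "U $ a $ b = cnj (v (ix a) $ b)" for a b by (simp add: U_def)
  have UU: "U ** cadj U = mat 1"
  proof -
    have "(U ** cadj U) $ a $ b = cinner (v (ix a)) (v (ix b))" for a b
      by (simp add: matrix_matrix_mult_def cU cinner_def Ue)
    then show ?thesis using orth ixl by (simp add: vec_eq_iff mat_def ixe)
  qed
  then have UU2: "cadj U ** U = mat 1" by (simp add: matrix_left_right_inverse)
  have U: "unitary U" using UU UU2 by (simp add: unitary_def)
  define D where "D = U ** H ** cadj U"
  have lamr: "lam j = cinner (v j) (H *v v j)" if j: "j < CARD('n)" for j
    using ev orth j by (simp add: cinner_smult_right)
  have lamc: "cnj (lam j) = lam j" if j: "j < CARD('n)" for j
    using lamr[OF j] hermitian_cinner[OF herm, of "v j" "v j"] by (simp add: cinner_commute[of "v j" "H *v v j"])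
  have lampos: "0 < Re (lam j)" if j: "j < CARD('n)" for j
  proof -
    have "v j \<noteq> 0" using orth j by (metis cinner_zero_left zero_neq_one)
    then show ?thesis using assms lamr[OF j] by (simp add: pos_def_quad)
  qed
  have Dent: "D $ a $ b = (if a = b then lam (ix a) else 0)" for a b
  proof -
    have "(H ** cadj U) $ c $ b = (H *v v (ix b)) $ c" for c
      by (simp add: matrix_matrix_mult_def matrix_vector_mult_def cU)
    then have col: "(H ** cadj U) $ c $ b = lam (ix b) * v (ix b) $ c" for c using ev ixl by simp
    have e1: "D = U ** (H ** cadj U)" by (simp add: D_def matrix_mul_assoc)
    have "D $ a $ b = (\<Sum>c\<in>UNIV. U $ a $ c * (H ** cadj U) $ c $ b)"
      unfolding e1 matrix_matrix_mult_def[of U "H ** cadj U"] by simp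
    also have "\<dots> = lam (ix b) * cinner (v (ix a)) (v (ix b))"
      by (simp add: col Ue cinner_def sum_distrib_left mult_ac)
    finally have "D $ a $ b = lam (ix b) * cinner (v (ix a)) (v (ix b))" .
    then show ?thesis using orth ixl by (simp add: ixe)
  qed
  have rD: "real_diag D" unfolding real_diag_def using Dent lamc ixl
    by (auto simp: Reals_cnj_iff complex_eq_iff)
  have pD: "\<forall>i. 0 < Re (D $ i $ i)" using Dent lampos ixl by simp
  have "cadj U ** D ** U = (cadj U ** U) ** H ** (cadj U ** U)"
    by (simp add: D_def matrix_mul_assoc)
  then have "H = cadj U ** D ** U" using UU2 by simp
  with U rD pD show ?thesis by blast
qed




lemma unitary_cancel1: "unitary U \<Longrightarrow> X ** U ** cadj U = X"
  by (simp add: matrix_mul_assoc[symmetric] unitaryD2)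
lemma unitary_cancel2: "unitary U \<Longrightarrow> X ** cadj U ** U = X"
  by (simp add: matrix_mul_assoc[symmetric] unitaryD1)

lemma backward:
  fixes A V :: "nat \<Rightarrow> complex^'n^'n"
  assumes Q: "pos_def Q" and U: "unitary U" and M: "real_diag M"
    and gt: "loewner_gt M (U ** Q ** cadj U)" and N: "pos_def N"
    and MN: "M - N ** N = U ** Q ** cadj U"
    and VV: "(\<Sum>i=1..m. cadj (V i) ** V i) = mat 1"
    and AV: "\<forall>i\<in>{1..m}. A i = mpow (cadj U ** M ** U) (- p i / 2) ** V i ** N ** U"
  shows "pos_def (cadj U ** M ** U) \<and>
     (cadj U ** M ** U) - (\<Sum>i=1..m. cadj (A i) ** mpow (cadj U ** M ** U) (p i) ** A i) = Q"
proof -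
  define X where "X = cadj U ** M ** U"
  have R: "pos_def (U ** Q ** cadj U)"
    using pos_def_congr[OF Q, of "cadj U"] unitary_inj'[OF U] by simp
  have Mp: "pos_def M" by (rule loewner_pos_def[OF gt R])
  interpret s: specd U M
    using U M pos_def_diag_pos[OF Mp] by unfold_locales auto
  have cN: "cadj N = N" using N by (simp add: pos_def_def hermitian_def)
  have tm: "cadj (A i) ** mpow X (p i) ** A i = cadj U ** N ** (cadj (V i) ** V i) ** N ** U"
    if i: "i \<in> {1..m}" for i
  proof -
    have "cadj (A i) ** mpow X (p i) ** A i =
      cadj U ** N ** cadj (V i) ** (mpow X (- p i / 2) ** mpow X (p i) ** mpow X (- p i / 2)) ** V i ** N ** U"
      using AV i by (simp add: X_def cadj_mult matrix_mul_assoc s.mpow_herm cN)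
    also have "mpow X (- p i / 2) ** mpow X (p i) ** mpow X (- p i / 2) = mat 1"
    proof -
      have "mpow X (- p i / 2) ** mpow X (p i) ** mpow X (- p i / 2) = mpow X (- p i / 2 + p i + - p i / 2)"
        by (simp add: X_def s.mpow_add)
      also have "- p i / 2 + p i + - p i / 2 = 0" by simp
      finally show ?thesis by (simp add: X_def s.mpow_0)
    qed
    finally show ?thesis by (simp add: matrix_mul_assoc)
  qed
  have "(\<Sum>i=1..m. cadj (A i) ** mpow X (p i) ** A i) = (\<Sum>i=1..m. (cadj U ** N) ** (cadj (V i) ** V i) ** (N ** U))"
    using tm by (simp add: matrix_mul_assoc)
  also have "\<dots> = (cadj U ** N) ** (\<Sum>i=1..m. cadj (V i) ** V i) ** (N ** U)"
    by (simp add: sum_mmul_right sum_mmul_left)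
  also have "\<dots> = cadj U ** (N ** N) ** U" using VV by (simp add: matrix_mul_assoc)
  also have "N ** N = M - U ** Q ** cadj U" by (subst MN[symmetric]) simp
  also have "cadj U ** (M - U ** Q ** cadj U) ** U = X - (cadj U ** U) ** Q ** (cadj U ** U)"
    by (simp add: X_def matrix_sub_ldistrib matrix_sub_rdistrib matrix_mul_assoc)
  also have "\<dots> = X - Q" using U by (simp add: unitaryD1)
  finally have "(\<Sum>i=1..m. cadj (A i) ** mpow X (p i) ** A i) = X - Q" .
  then show ?thesis using s.P_pos_def by (simp add: X_def)
qed

lemma forward:
  fixes A :: "nat \<Rightarrow> complex^'n^'n"
  assumes m: "m \<ge> 1" and inv: "\<forall>i\<in>{1..m}. invertible (A i)"
    and X: "pos_def X" and eq: "X - (\<Sum>i=1..m. cadj (A i) ** mpow X (p i) ** A i) = Q"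
  shows "\<exists>U M N V. unitary U \<and> real_diag M \<and> loewner_gt M (U ** Q ** cadj U) \<and>
             pos_def N \<and> M - N ** N = U ** Q ** cadj U \<and>
             (\<Sum>i=1..m. cadj (V i) ** V i) = mat 1 \<and>
             (\<forall>i\<in>{1..m}. A i = mpow (cadj U ** M ** U) (- p i / 2) ** V i ** N ** U)"
proof -
  obtain U D where U: "unitary U" and D: "real_diag D" and Dp: "\<forall>i. 0 < Re (D $ i $ i)"
    and XU: "X = cadj U ** D ** U"
    using spectral[OF X] by blast
  interpret s: specd U D using U D Dp by unfold_locales
  define S where "S = (\<Sum>i=1..m. cadj (A i) ** mpow X (p i) ** A i)"
  have Sp: "pos_def S" unfolding S_def
  proof (rule pos_def_sum)
    show "{1..m} \<noteq> {}" using m by simp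
    show "\<forall>i\<in>{1..m}. pos_def (cadj (A i) ** mpow X (p i) ** A i)"
    proof
      fix i assume "i \<in> {1..m}"
      then have "invertible (A i)" using inv by blast
      then show "pos_def (cadj (A i) ** mpow X (p i) ** A i)"
        unfolding XU by (intro pos_def_congr[OF s.mpow_pos_def]) (rule invertible_inj)
    qed
  qed simp
  define G where "G = D - U ** Q ** cadj U"
  have DX: "D = U ** X ** cadj U"
    using U by (simp add: XU matrix_mul_assoc unitaryD2 unitary_cancel1)
  have QX: "Q = X - S" using eq by (simp add: S_def)
  have GS: "G = U ** S ** cadj U"
    by (simp add: G_def DX QX matrix_sub_ldistrib matrix_sub_rdistrib matrix_mul_assoc)
  have Gp: "pos_def G"
    using pos_def_congr[OF Sp, of "cadj U"] unitary_inj'[OF U] by (simp add: GS)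
  obtain U2 E where U2: "unitary U2" and E: "real_diag E" and Ep: "\<forall>i. 0 < Re (E $ i $ i)"
    and GU: "G = cadj U2 ** E ** U2"
    using spectral[OF Gp] by blast
  interpret g: specd U2 E using U2 E Ep by unfold_locales
  define N where "N = mpow G (1/2)"
  define Ni where "Ni = mpow G (-1/2)"
  have NN: "N ** N = G" unfolding N_def GU by (simp add: g.mpow_add g.mpow_1)
  have NiN: "Ni ** N = mat 1" unfolding N_def Ni_def GU by (simp add: g.mpow_add g.mpow_0)
  have NNi: "N ** Ni = mat 1" unfolding N_def Ni_def GU by (simp add: g.mpow_add g.mpow_0)
  have Np: "pos_def N" unfolding N_def GU by (rule g.mpow_pos_def)
  have cNi: "cadj Ni = Ni" unfolding Ni_def GU by (rule g.mpow_herm)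
  define V where "V i = mpow X (p i / 2) ** A i ** cadj U ** Ni" for i
  have VV: "cadj (V i) ** V i = Ni ** U ** (cadj (A i) ** mpow X (p i) ** A i) ** cadj U ** Ni" for i
  proof -
    have "cadj (V i) ** V i = Ni ** U ** cadj (A i) ** (mpow X (p i / 2) ** mpow X (p i / 2)) ** A i ** cadj U ** Ni"
      by (simp add: V_def cadj_mult cNi XU s.mpow_herm matrix_mul_assoc)
    also have "mpow X (p i / 2) ** mpow X (p i / 2) = mpow X (p i)"
      by (simp add: XU s.mpow_add)
    finally show ?thesis by (simp add: matrix_mul_assoc)
  qed
  have "(\<Sum>i=1..m. cadj (V i) ** V i) = (\<Sum>i=1..m. (Ni ** U) ** (cadj (A i) ** mpow X (p i) ** A i) ** (cadj U ** Ni))"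
    by (simp add: VV matrix_mul_assoc)
  also have "\<dots> = (Ni ** U) ** S ** (cadj U ** Ni)"
    by (simp add: S_def sum_mmul_right sum_mmul_left)
  also have "\<dots> = Ni ** G ** Ni" by (simp add: GS matrix_mul_assoc)
  also have "\<dots> = (Ni ** N) ** (N ** Ni)" by (simp add: NN[symmetric] matrix_mul_assoc)
  also have "\<dots> = mat 1" by (simp add: NiN NNi)
  finally have sumV: "(\<Sum>i=1..m. cadj (V i) ** V i) = mat 1" .
  have AV: "A i = mpow (cadj U ** D ** U) (- p i / 2) ** V i ** N ** U" for i
  proof -
    have "mpow X (- p i / 2) ** V i ** N ** U =
        (mpow X (- p i / 2) ** mpow X (p i / 2)) ** A i ** cadj U ** (Ni ** N) ** U"
      by (simp add: V_def matrix_mul_assoc)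
    also have "mpow X (- p i / 2) ** mpow X (p i / 2) = mat 1"
      by (simp add: XU s.mpow_add s.mpow_0)
    finally show ?thesis using U by (simp add: NiN XU matrix_mul_assoc[symmetric] unitaryD1)
  qed
  have L: "loewner_gt D (U ** Q ** cadj U)" using Gp by (simp add: loewner_gt_def G_def)
  have DN: "D - N ** N = U ** Q ** cadj U" by (simp add: NN G_def)
  show ?thesis
    apply (rule exI[of _ U])
    apply (rule exI[of _ D])
    apply (rule exI[of _ N])
    apply (rule exI[of _ V])
    by (intro conjI U D L Np DN sumV ballI AV)
qed

theorem theorem2:
  fixes m :: nat and A :: "nat \<Rightarrow> complex^'n^'n" and p :: "nat \<Rightarrow> real"
    and Q :: "complex^'n^'n"
  assumes "m \<ge> 1"
    and "\<forall>i\<in>{1..m}. invertible (A i)"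
    and "\<forall>i\<in>{1..m}. 0 < p i"
    and "pos_def Q"
  shows "((\<exists>X. pos_def X \<and> X - (\<Sum>i=1..m. cadj (A i) ** mpow X (p i) ** A i) = Q) \<longleftrightarrow>
          (\<exists>U M N V. unitary U \<and> real_diag M \<and> loewner_gt M (U ** Q ** cadj U) \<and>
             pos_def N \<and> M - N ** N = U ** Q ** cadj U \<and>
             (\<Sum>i=1..m. cadj (V i) ** V i) = mat 1 \<and>
             (\<forall>i\<in>{1..m}. A i = mpow (cadj U ** M ** U) (- p i / 2) ** V i ** N ** U)))
       \<and> (\<forall>U M N V. unitary U \<and> real_diag M \<and> loewner_gt M (U ** Q ** cadj U) \<and>
             pos_def N \<and> M - N ** N = U ** Q ** cadj U \<and>
             (\<Sum>i=1..m. cadj (V i) ** V i) = mat 1 \<and>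
             (\<forall>i\<in>{1..m}. A i = mpow (cadj U ** M ** U) (- p i / 2) ** V i ** N ** U)
           \<longrightarrow> (let X = cadj U ** M ** U in
                 pos_def X \<and> X - (\<Sum>i=1..m. cadj (A i) ** mpow X (p i) ** A i) = Q))"
proof -
  have bw: "pos_def (cadj U ** M ** U) \<and>
     (cadj U ** M ** U) - (\<Sum>i=1..m. cadj (A i) ** mpow (cadj U ** M ** U) (p i) ** A i) = Q"
    if "unitary U \<and> real_diag M \<and> loewner_gt M (U ** Q ** cadj U) \<and>
             pos_def N \<and> M - N ** N = U ** Q ** cadj U \<and>
             (\<Sum>i=1..m. cadj (V i) ** V i) = mat 1 \<and>
             (\<forall>i\<in>{1..m}. A i = mpow (cadj U ** M ** U) (- p i / 2) ** V i ** N ** U)"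
    for U M N V
    using that apply (elim conjE)
    apply (rule backward[OF assms(4)])
    by assumption+
  show ?thesis
  proof (intro conjI iffI allI impI)
    assume "\<exists>X. pos_def X \<and> X - (\<Sum>i=1..m. cadj (A i) ** mpow X (p i) ** A i) = Q"
    then obtain X where "pos_def X" "X - (\<Sum>i=1..m. cadj (A i) ** mpow X (p i) ** A i) = Q" by blast
    from forward[OF assms(1,2) this] show "\<exists>U M N V. unitary U \<and> real_diag M \<and> loewner_gt M (U ** Q ** cadj U) \<and>
             pos_def N \<and> M - N ** N = U ** Q ** cadj U \<and>
             (\<Sum>i=1..m. cadj (V i) ** V i) = mat 1 \<and>
             (\<forall>i\<in>{1..m}. A i = mpow (cadj U ** M ** U) (- p i / 2) ** V i ** N ** U)" .
  next
    assume "\<exists>U M N V. unitary U \<and> real_diag M \<and> loewner_gt M (U ** Q ** cadj U) \<and>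
             pos_def N \<and> M - N ** N = U ** Q ** cadj U \<and>
             (\<Sum>i=1..m. cadj (V i) ** V i) = mat 1 \<and>
             (\<forall>i\<in>{1..m}. A i = mpow (cadj U ** M ** U) (- p i / 2) ** V i ** N ** U)"
    then obtain U M N V where "unitary U \<and> real_diag M \<and> loewner_gt M (U ** Q ** cadj U) \<and>
             pos_def N \<and> M - N ** N = U ** Q ** cadj U \<and>
             (\<Sum>i=1..m. cadj (V i) ** V i) = mat 1 \<and>
             (\<forall>i\<in>{1..m}. A i = mpow (cadj U ** M ** U) (- p i / 2) ** V i ** N ** U)" by blast
    from bw[OF this] show "\<exists>X. pos_def X \<and> X - (\<Sum>i=1..m. cadj (A i) ** mpow X (p i) ** A i) = Q" by blast
  next
    fix U M N V
    assume "unitary U \<and> real_diag M \<and> loewner_gt M (U ** Q ** cadj U) \<and>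
             pos_def N \<and> M - N ** N = U ** Q ** cadj U \<and>
             (\<Sum>i=1..m. cadj (V i) ** V i) = mat 1 \<and>
             (\<forall>i\<in>{1..m}. A i = mpow (cadj U ** M ** U) (- p i / 2) ** V i ** N ** U)"
    from bw[OF this] show "let X = cadj U ** M ** U in
                 pos_def X \<and> X - (\<Sum>i=1..m. cadj (A i) ** mpow X (p i) ** A i) = Q"
      by (simp only: Let_def)
  qed
qed


end
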